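(* Let $d\ge1$ and let $p,q\in[0,1]$ satisfy $p\ge\sqrt{2qd}$. Let $u_0,\dots,u_{d-1}$, $v_0,\dots,v_{d-1}$ be $\mathrm{Bern}(p)$ random variables and $x_0,\dots,x_{d^2-1}$ be $\mathrm{Bern}(q)$ random variables, all mutually independent. Then for every subset $S\subseteq\{0,1,\dots,d^2-1\}$, $$\mathbb{P}\Big(\sum_{i\in S}u_{\lfloor i/d\rfloor}\,v_{i\bmod d}=0\Big)\le\mathbb{P}\Big(\sum_{i\in S}x_i=0\Big).$$
   Context: $\mathrm{Bern}(p)$ denotes the distribution on $\{0,1\}$ taking value $1$ with probability $p$. *)

theory Defs
  imports "HOL-Probability.Probability"
begin

text \<open>Joint law of d+d+d^2 mutually independent Bernoulli variables:
  u_0..u_{d-1}, v_0..v_{d-1} ~ Bern(p), x_0..x_{d^2-1} ~ Bern(q).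
  Outside their index ranges the functions take the dummy value False.\<close>
definition bern_vec :: "nat \<Rightarrow> real \<Rightarrow> (nat \<Rightarrow> bool) pmf" where
  "bern_vec n r = Pi_pmf {..<n} False (\<lambda>_. bernoulli_pmf r)"

definition joint_law :: "nat \<Rightarrow> real \<Rightarrow> real \<Rightarrow> ((nat \<Rightarrow> bool) \<times> (nat \<Rightarrow> bool) \<times> (nat \<Rightarrow> bool)) pmf" where
  "joint_law d p q = pair_pmf (bern_vec d p) (pair_pmf (bern_vec d p) (bern_vec (d^2) q))"

end

theory Submission
  imports Defs
begin

lemma prob_pair_prod:
  "measure_pmf.prob (pair_pmf M N) (A \<times> B) = measure_pmf.prob M A * measure_pmf.prob N B"
proof -
  have "emeasure (measure_pmf (pair_pmf M N)) (A \<times> B) = (\<integral>\<^sup>+x. indicator (A \<times> B) x \<partial>pair_pmf M N)"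
    by simp
  also have "\<dots> = (\<integral>\<^sup>+a. \<integral>\<^sup>+b. indicator A a * indicator B b \<partial>N \<partial>M)"
    by (simp add: nn_integral_pair_pmf' indicator_times)
  also have "\<dots> = (\<integral>\<^sup>+a. indicator A a * emeasure N B \<partial>M)"
    by (simp add: nn_integral_cmult)
  also have "\<dots> = emeasure M A * emeasure N B"
    by (simp add: nn_integral_multc)
  finally have "ennreal (measure_pmf.prob (pair_pmf M N) (A \<times> B)) = ennreal (measure_pmf.prob M A * measure_pmf.prob N B)"
    by (simp add: measure_pmf.emeasure_eq_measure ennreal_mult)
  then show ?thesis by (subst (asm) ennreal_inj) auto
qed

lemma rearr:
  "map_pmf (\<lambda>((y,f),(z,g)). ((y,z),(f,g))) (pair_pmf (pair_pmf M1 N1) (pair_pmf M2 N2))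
   = pair_pmf (pair_pmf M1 M2) (pair_pmf N1 N2)"
proof (rule pmf_eqI)
  fix i :: "('a \<times> 'b) \<times> ('c \<times> 'd)"
  obtain y z f g where i: "i = ((y,z),(f,g))" by (metis prod.collapse)
  have inj: "inj (\<lambda>((y::'a,f::'c),(z::'b,g::'d)). ((y,z),(f,g)))"
    by (auto simp: inj_def)
  have "i = (\<lambda>((y,f),(z,g)). ((y,z),(f,g))) ((y,f),(z,g))" by (simp add: i)
  then show "pmf (map_pmf (\<lambda>((y,f),(z,g)). ((y,z),(f,g))) (pair_pmf (pair_pmf M1 N1) (pair_pmf M2 N2))) i
    = pmf (pair_pmf (pair_pmf M1 M2) (pair_pmf N1 N2)) i"
    apply (simp only:)
    apply (subst pmf_map_inj'[OF inj])
    by (simp add: i pmf_pair)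
qed

lemma factor:
  assumes "finite A'" "finite B'" "a \<notin> A'" "b \<notin> B'"
    and inv: "\<And>f g y z. P (f(a:=y)) (g(b:=z)) = P f g"
  shows "measure_pmf.prob (pair_pmf (Pi_pmf (insert a A') dflt (\<lambda>_. M)) (Pi_pmf (insert b B') dflt (\<lambda>_. N)))
           {(u,v). \<not>(u a \<and> v b) \<and> P u v}
       = measure_pmf.prob (pair_pmf M N) {(y,z). \<not>(y \<and> z)}
         * measure_pmf.prob (pair_pmf (Pi_pmf A' dflt (\<lambda>_. M)) (Pi_pmf B' dflt (\<lambda>_. N))) {(f,g). P f g}"
proof -
  let ?W = "pair_pmf (pair_pmf M (Pi_pmf A' dflt (\<lambda>_. M))) (pair_pmf N (Pi_pmf B' dflt (\<lambda>_. N)))"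
  let ?h = "\<lambda>(a', b'). ((\<lambda>(y,f). f(a:=y)) a', (\<lambda>(z,g). g(b:=z)) b')"
  let ?t = "\<lambda>((y::bool,f),(z::bool,g)). ((y,z),(f,g))"
  have "measure_pmf.prob (pair_pmf (Pi_pmf (insert a A') dflt (\<lambda>_. M)) (Pi_pmf (insert b B') dflt (\<lambda>_. N)))
           {(u,v). \<not>(u a \<and> v b) \<and> P u v}
      = measure_pmf.prob (map_pmf ?h ?W) {(u,v). \<not>(u a \<and> v b) \<and> P u v}"
    by (simp only: Pi_pmf_insert[OF assms(1,3)] Pi_pmf_insert[OF assms(2,4)] map_pair)
  also have "\<dots> = measure_pmf.prob ?W (?h -` {(u,v). \<not>(u a \<and> v b) \<and> P u v})"
    by simp
  also have "?h -` {(u,v). \<not>(u a \<and> v b) \<and> P u v} = ?t -` ({(y,z). \<not>(y \<and> z)} \<times> {(f,g). P f g})"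
    by (auto simp: inv)
  also have "measure_pmf.prob ?W \<dots> = measure_pmf.prob (map_pmf ?t ?W) ({(y,z). \<not>(y \<and> z)} \<times> {(f,g). P f g})"
    by simp
  also have "\<dots> = measure_pmf.prob (pair_pmf (pair_pmf M N) (pair_pmf (Pi_pmf A' dflt (\<lambda>_. M)) (Pi_pmf B' dflt (\<lambda>_. N))))
       ({(y,z). \<not>(y \<and> z)} \<times> {(f,g). P f g})"
    by (simp only: rearr)
  finally show ?thesis by (simp only: prob_pair_prod)
qed

lemma prob_not_both:
  assumes "0 \<le> p" "p \<le> 1"
  shows "measure_pmf.prob (pair_pmf (bernoulli_pmf p) (bernoulli_pmf p)) {(y,z). \<not>(y \<and> z)} = 1 - p^2"
proof -
  have "{(y,z). \<not>(y \<and> z)} = {(False,False),(False,True),(True,False)}" by auto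
  then show ?thesis using assms
    by (simp add: measure_measure_pmf_finite pmf_pair power2_eq_square algebra_simps)
qed

lemma main_ind:
  fixes d :: nat and p q :: real
  assumes p0: "0 \<le> p" and p1: "p \<le> 1" and q0: "0 \<le> q" and q1: "q \<le> 1"
    and pq: "p^2 \<ge> 2 * q * real d"
  shows "finite A \<Longrightarrow> finite B \<Longrightarrow> E \<subseteq> A \<times> B \<Longrightarrow> E \<subseteq> {..<d} \<times> {..<d} \<Longrightarrow>
    measure_pmf.prob (pair_pmf (Pi_pmf A False (\<lambda>_. bernoulli_pmf p)) (Pi_pmf B False (\<lambda>_. bernoulli_pmf p)))
      {(u,v). \<forall>(x,y)\<in>E. \<not>(u x \<and> v y)} \<le> (1-q)^card E"
proof (induction "card E" arbitrary: A B E rule: less_induct)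
  case less
  show ?case
  proof (cases "E = {}")
    case True
    then show ?thesis by simp
  next
    case False
    then obtain a b where ab: "(a,b) \<in> E" by auto
    have fE: "finite E" using less.prems finite_subset by blast
    have aA: "a \<in> A" and bB: "b \<in> B" using ab less.prems by auto
    have ad: "a < d" and bd: "b < d" using ab less.prems by auto
    then have d1: "d \<ge> 1" by simp
    define A' where "A' = A - {a}"
    define B' where "B' = B - {b}"
    define E' where "E' = E \<inter> (A' \<times> B')"
    have AA: "A = insert a A'" using aA A'_def by auto
    have BB: "B = insert b B'" using bB B'_def by auto
    have fA': "finite A'" "finite B'" using less.prems A'_def B'_def by auto
    have E'sub: "E' \<subseteq> E" by (auto simp: E'_def)
    have cardlt: "card E' < card E"
      using ab fE E'sub by (intro psubset_card_mono) (auto simp: E'_def A'_def)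
    have IH: "measure_pmf.prob (pair_pmf (Pi_pmf A' False (\<lambda>_. bernoulli_pmf p)) (Pi_pmf B' False (\<lambda>_. bernoulli_pmf p)))
      {(u,v). \<forall>(x,y)\<in>E'. \<not>(u x \<and> v y)} \<le> (1-q)^card E'"
      using less.hyps[OF cardlt fA'] less.prems E'sub by (auto simp: E'_def)
    define X where "X = {a} \<times> {..<d}"
    define Y where "Y = {..<d} \<times> {b}"
    have cX: "card X = d" and cY: "card Y = d" by (auto simp: X_def Y_def card_cartesian_product)
    have XY: "X \<inter> Y = {(a,b)}" using ad bd by (auto simp: X_def Y_def)
    have cXY: "card (X \<union> Y) = 2*d - 1"
      using card_Un_Int[of X Y] cX cY XY by (simp add: X_def Y_def)
    have "E \<subseteq> E' \<union> (X \<union> Y)" using less.prems by (auto simp: E'_def A'_def B'_def X_def Y_def)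
    then have "card E \<le> card (E' \<union> (X \<union> Y))"
      by (intro card_mono) (auto simp: X_def Y_def E'_def intro: finite_subset[OF _ fE])
    also have "\<dots> \<le> card E' + (2*d-1)" using card_Un_le[of E' "X \<union> Y"] cXY by simp
    finally have cardE: "card E \<le> card E' + (2*d-1)" .
    let ?M = "pair_pmf (Pi_pmf A False (\<lambda>_. bernoulli_pmf p)) (Pi_pmf B False (\<lambda>_. bernoulli_pmf p))"
    have "measure_pmf.prob ?M {(u,v). \<forall>(x,y)\<in>E. \<not>(u x \<and> v y)}
        \<le> measure_pmf.prob ?M {(u,v). \<not>(u a \<and> v b) \<and> (\<lambda>u v. \<forall>(x,y)\<in>E'. \<not>(u x \<and> v y)) u v}"
      using ab E'sub by (intro measure_pmf.finite_measure_mono) auto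
    also have "\<dots> = measure_pmf.prob (pair_pmf (bernoulli_pmf p) (bernoulli_pmf p)) {(y,z). \<not>(y \<and> z)}
         * measure_pmf.prob (pair_pmf (Pi_pmf A' False (\<lambda>_. bernoulli_pmf p)) (Pi_pmf B' False (\<lambda>_. bernoulli_pmf p)))
             {(f,g). \<forall>(x,y)\<in>E'. \<not>(f x \<and> g y)}"
      unfolding AA BB
      by (rule factor) (use less.prems(1,2) in \<open>auto simp: fA' A'_def B'_def E'_def\<close>)
    also have "\<dots> = (1 - p^2) * measure_pmf.prob (pair_pmf (Pi_pmf A' False (\<lambda>_. bernoulli_pmf p)) (Pi_pmf B' False (\<lambda>_. bernoulli_pmf p)))
             {(f,g). \<forall>(x,y)\<in>E'. \<not>(f x \<and> g y)}"
      by (simp only: prob_not_both[OF p0 p1])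
    also have "\<dots> \<le> (1-q)^(2*d-1) * (1-q)^card E'"
    proof (rule mult_mono)
      have "1 + real (2*d-1) * (-q) \<le> (1 + (-q))^(2*d-1)"
        by (rule Bernoulli_inequality) (use q1 in simp)
      moreover have "real (2*d-1) = 2 * real d - 1" using d1 by simp
      ultimately have "1 - (2*real d - 1)*q \<le> (1-q)^(2*d-1)" by simp
      moreover have "1 - p^2 \<le> 1 - (2*real d - 1)*q" using pq q0 by (simp add: algebra_simps)
      ultimately show "1 - p^2 \<le> (1-q)^(2*d-1)" by linarith
      show "0 \<le> (1-q)^(2*d-1)" using q1 by simp
    qed (use IH in auto)
    also have "\<dots> = (1-q)^(card E' + (2*d-1))" by (simp add: power_add)
    also have "\<dots> \<le> (1-q)^card E"
      by (rule power_decreasing[OF cardE]) (use q0 q1 in auto)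
    finally show ?thesis .
  qed
qed


theorem lemmaD2:
  fixes d :: nat and p q :: real and S :: "nat set"
  assumes "d \<ge> 1"
    and "0 \<le> p" "p \<le> 1" "0 \<le> q" "q \<le> 1"
    and "p \<ge> sqrt (2 * q * real d)"
    and "S \<subseteq> {..<d^2}"
  shows "measure_pmf.prob (joint_law d p q)
           {(u, v, x). (\<Sum>i\<in>S. (of_bool (u (i div d)) * of_bool (v (i mod d)) :: nat)) = 0}
         \<le> measure_pmf.prob (joint_law d p q)
           {(u, v, x). (\<Sum>i\<in>S. (of_bool (x i) :: nat)) = 0}"
proof -
  have fS: "finite S" using assms(7) finite_subset by blast
  define E where "E = (\<lambda>i. (i div d, i mod d)) ` S"
  have inj: "inj_on (\<lambda>i. (i div d, i mod d)) S"
    by (rule inj_onI) (metis div_mult_mod_eq prod.inject)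
  have cE: "card E = card S" unfolding E_def using card_image[OF inj] .
  have Esub: "E \<subseteq> {..<d} \<times> {..<d}"
  proof
    fix e assume "e \<in> E"
    then obtain i where i: "i \<in> S" "e = (i div d, i mod d)" by (auto simp: E_def)
    have "i < d * d" using i assms(7) by (auto simp: power2_eq_square)
    then have "i div d < d" using assms(1) by (simp add: less_mult_imp_div_less)
    moreover have "i mod d < d" using assms(1) by simp
    ultimately show "e \<in> {..<d} \<times> {..<d}" using i by simp
  qed
  have pq: "p^2 \<ge> 2 * q * real d"
  proof -
    have "0 \<le> 2 * q * real d" using assms(4) by simp
    then have "sqrt (2 * q * real d) ^ 2 = 2 * q * real d" by simp
    moreover have "sqrt (2 * q * real d) ^ 2 \<le> p^2"
      using assms(6) assms(4) by (intro power_mono) auto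
    ultimately show ?thesis by simp
  qed
  let ?Pd = "Pi_pmf {..<d} False (\<lambda>_. bernoulli_pmf p)"
  let ?Z = "Pi_pmf {..<d^2} False (\<lambda>_. bernoulli_pmf q)"
  let ?Ev = "{(u,v). \<forall>(x,y)\<in>E. \<not>(u x \<and> v y)}"
  have "{(u, v, x::nat\<Rightarrow>bool). (\<Sum>i\<in>S. (of_bool (u (i div d)) * of_bool (v (i mod d)) :: nat)) = 0}
      = (\<lambda>(a,b). (id a, fst b)) -` ?Ev"
    using fS by (auto simp: E_def)
  then have "measure_pmf.prob (joint_law d p q)
           {(u, v, x). (\<Sum>i\<in>S. (of_bool (u (i div d)) * of_bool (v (i mod d)) :: nat)) = 0}
      = measure_pmf.prob (map_pmf (\<lambda>(a,b). (id a, fst b)) (joint_law d p q)) ?Ev"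
    by (simp only: measure_map_pmf)
  also have "map_pmf (\<lambda>(a,b). (id a, fst b)) (joint_law d p q) = pair_pmf ?Pd ?Pd"
    unfolding joint_law_def map_pair by (simp add: map_fst_pair_pmf bern_vec_def)
  also have "measure_pmf.prob (pair_pmf ?Pd ?Pd) ?Ev \<le> (1-q)^card E"
    by (rule main_ind[OF assms(2-5) pq]) (use Esub in auto)
  also have "(1-q)^card E = measure_pmf.prob (joint_law d p q)
           {(u, v, x). (\<Sum>i\<in>S. (of_bool (x i) :: nat)) = 0}"
  proof -
    define Bs where "Bs = (\<lambda>i. if i \<in> S then {False} else (UNIV :: bool set))"
    have "{(u::nat\<Rightarrow>bool, v::nat\<Rightarrow>bool, x). (\<Sum>i\<in>S. (of_bool (x i) :: nat)) = 0} = (snd \<circ> snd) -` Pi {..<d^2} Bs"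
    proof -
      have "{(u::nat\<Rightarrow>bool, v::nat\<Rightarrow>bool, x). (\<Sum>i\<in>S. (of_bool (x i) :: nat)) = 0}
          = {y. \<forall>i\<in>S. \<not> snd (snd y) i}" using fS by auto
      also have "\<dots> = (snd \<circ> snd) -` Pi {..<d^2} Bs"
      proof (intro equalityI subsetI)
        fix y :: "(nat\<Rightarrow>bool)\<times>(nat\<Rightarrow>bool)\<times>(nat\<Rightarrow>bool)"
        assume "y \<in> (snd \<circ> snd) -` Pi {..<d^2} Bs"
        then have "\<forall>i\<in>{..<d^2}. snd (snd y) i \<in> Bs i" by (auto simp: Pi_def)
        then have h: "\<And>i. i \<in> S \<Longrightarrow> snd (snd y) i \<in> Bs i" using assms(7) by blast
        show "y \<in> {y. \<forall>i\<in>S. \<not> snd (snd y) i}"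
        proof (clarsimp)
          fix i assume "i \<in> S" "snd (snd y) i"
          then show False using h[of i] by (simp add: Bs_def)
        qed
      qed (auto simp: Bs_def Pi_def)
      finally show ?thesis .
    qed
    then have "measure_pmf.prob (joint_law d p q)
           {(u, v, x). (\<Sum>i\<in>S. (of_bool (x i) :: nat)) = 0}
       = measure_pmf.prob (map_pmf snd (map_pmf snd (joint_law d p q))) (Pi {..<d^2} Bs)"
      by (simp add: map_pmf_comp comp_def)
    also have "map_pmf snd (map_pmf snd (joint_law d p q)) = ?Z"
      by (simp add: joint_law_def map_snd_pair_pmf bern_vec_def)
    also have "measure_pmf.prob ?Z (Pi {..<d^2} Bs) = (\<Prod>i\<in>{..<d^2}. measure_pmf.prob (bernoulli_pmf q) (Bs i))"
      by (rule measure_Pi_pmf_Pi) simp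
    also have "\<dots> = (\<Prod>i\<in>{..<d^2}. if i \<in> S then 1 - q else 1)"
      by (rule prod.cong) (auto simp: Bs_def measure_pmf_single assms(4,5))
    also have "\<dots> = (\<Prod>i\<in>S. 1 - q)"
      using assms(7) by (subst prod.If_cases) (auto simp: Int_absorb1 Int_absorb2)
    finally show ?thesis using cE by simp
  qed
  finally show ?thesis .
qed

end
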